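(* For every integer $m$ with $3\leq m\leq 6$ we have $d_m\geq \frac{1}{m+2}$, and for every integer $m\geq 7$ we have $d_m\geq\frac18$.
   Context: For a positive integer $m$, a subset $A$ of an abelian group is $m$-sum-free if there is no triple $(x,y,z)\in A^3$ with $x+y=mz$. For a prime $p$, $d_m(\mathbb{Z}/p\mathbb{Z})=\max\{|A|/p : A\subseteq \mathbb{Z}/p\mathbb{Z}\ \text{is } m\text{-sum-free}\}$. For $m\ge 3$ it is known (from prior work) that $d_m(\mathbb{Z}/p\mathbb{Z})$ converges as $p\to\infty$ through primes; $d_m$ denotes this limit. *)

theory Defs
  imports Complex_Main "HOL-Computational_Algebra.Primes"
begin

text \<open>Z/pZ is represented by the residues {0..<p}; addition and scalar
multiplication are taken mod p.\<close>

definition msum_free_mod :: "nat \<Rightarrow> nat \<Rightarrow> nat set \<Rightarrow> bool" where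
  "msum_free_mod m p A \<longleftrightarrow>
     A \<subseteq> {..<p} \<and>
     \<not> (\<exists>x\<in>A. \<exists>y\<in>A. \<exists>z\<in>A. (x + y) mod p = (m * z) mod p)"

definition dm_mod :: "nat \<Rightarrow> nat \<Rightarrow> real" where
  "dm_mod m p = Max {real (card A) / real p | A. msum_free_mod m p A}"

definition primes_at_top :: "nat filter" where
  "primes_at_top = inf sequentially (principal {p. prime p})"

end

theory Submission
  imports Defs
begin
lemma sumfree_core:
  fixes m p a W k x y z j1 j2 j :: int
  assumes m3: "m \<ge> 3" and pp: "p > 0"
    and j1: "0 \<le> j1" "j1 < k" and j2: "0 \<le> j2" "j2 < k" and j: "0 \<le> j" "j < k"
    and x1: "a + j1*p < m*x" and x2: "m*x < a + j1*p + W"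
    and y1: "a + j2*p < m*y" and y2: "m*y < a + j2*p + W"
    and z1: "a + j*p < m*z" and z2: "m*z < a + j*p + W"
    and H1: "2*(k-1)*p + 2*W \<le> (m-2)*a" and H2: "(m-2)*a \<le> m*(p-W)"
  shows "\<not> p dvd (x + y - m*z)"
proof
  assume dv: "p dvd (x + y - m*z)"
  have a1: "j1*p \<le> (k-1)*p" using j1 pp by (intro mult_right_mono) auto
  have a2: "j2*p \<le> (k-1)*p" using j2 pp by (intro mult_right_mono) auto
  have b1: "0 \<le> j1*p" "0 \<le> j2*p" "0 \<le> j*p" using j1 j2 j pp by auto
  have e1: "(m-2)*a + 2*a = m*a" by (simp add: algebra_simps)
  have e4: "m*(x+y) = m*x+m*y" "m*(a+1) = m*a+m" "2*(k-1)*p = 2*((k-1)*p)" by (simp_all add: algebra_simps)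
  have "m*(x+y) < m*(a+1)" using x2 y2 a1 a2 H1 e1 e4 m3 by linarith
  hence s1: "x + y < a + 1" using m3 by (simp add: mult_less_cancel_left_pos)
  have e2: "m*(a + W - 1 - p) = (m-2)*a + 2*a + m*(W-p) - m" by (simp add: algebra_simps)
  have e3: "m*(p-W) + m*(W-p) = 0" by (simp add: algebra_simps)
  have "m*(a + W - 1 - p) < m*(x+y)" using e2 e3 H2 x1 y1 b1 m3 e4 by (smt (verit))
  hence s2: "a + W - 1 - p < x + y" using m3 by (simp add: mult_less_cancel_left_pos)
  define d where "d = x + y - m*z + (j+1)*p"
  have "p dvd d" unfolding d_def using dv by (simp add: dvd_add)
  moreover have "0 < d" "d < p" using s1 s2 z1 z2 unfolding d_def by (simp_all add: algebra_simps)
  ultimately show False using zdvd_imp_le by fastforce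
qed

lemma divb:
  fixes a b :: int assumes "b > 0"
  shows "b * (a div b) \<le> a" "a < b * (a div b) + b"
proof -
  have "a = b * (a div b) + a mod b" by simp
  moreover have "0 \<le> a mod b" "a mod b < b" using assms by auto
  ultimately show "b * (a div b) \<le> a" "a < b * (a div b) + b" by linarith+
qed

lemma construct:
  fixes m k p :: nat
  assumes m3: "m \<ge> 3" and k1: "k \<ge> 1" and km: "k \<le> m - 2" and k2: "2*k \<le> m + 1" and pm: "p \<ge> m"
  shows "\<exists>A. msum_free_mod m p A \<and>
     real (card A) \<ge> real k*(real m+2-2*real k)*real p/(real m*(real m+2)) - 4*real k"
proof -
  define M where "M = int m"
  define K where "K = int k"
  define P where "P = int p"
  have M3: "M \<ge> 3" and K1: "K \<ge> 1" and KM: "K \<le> M - 2" and K2: "2*K \<le> M+1" and PM: "P \<ge> M"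
    using m3 k1 km k2 pm unfolding M_def K_def P_def by auto
  define W where "W = ((M+2-2*K)*P - M) div (M+2)"
  define a where "a = (2*(K-1)*P + 2*W + (M-3)) div (M-2)"
  define n where "n = nat (W div M - 1)"
  define f where "f = (\<lambda>(j::nat,i::nat). nat ((a + int j*P) div M + 1 + int i))"
  define A where "A = f ` ({..<k} \<times> {..<n})"
  have P0: "P > 0" using PM M3 by linarith
  have c1: "(M+2-2*K)*P \<ge> 1*P" using K2 P0 by (intro mult_right_mono) auto
  have W0: "(M+2-2*K)*P - M \<ge> 0" using c1 PM by linarith
  have FW: "(M+2)*W \<le> (M+2-2*K)*P - M" "(M+2-2*K)*P - M < (M+2)*W + (M+2)"
    unfolding W_def using divb[of "M+2"] M3 by auto
  have W0': "W \<ge> 0"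
  proof -
    have "(M+2)*(W+1) > 0" using FW W0 by (simp add: algebra_simps)
    hence "W + 1 > 0" using M3 by (simp add: zero_less_mult_iff)
    thus ?thesis by simp
  qed
  have Fa: "(M-2)*a \<le> 2*(K-1)*P + 2*W + (M-3)" "2*(K-1)*P + 2*W + (M-3) < (M-2)*a + (M-2)"
    unfolding a_def using divb[of "M-2"] M3 by auto
  have Fa1: "2*(K-1)*P + 2*W \<le> (M-2)*a" using Fa by linarith
  have e5: "(M+2-2*K)*P + 2*(K-1)*P = M*P" by (simp add: algebra_simps)
  have e6: "M*(P-W) = M*P - M*W" "(M+2)*W = M*W + 2*W" by (simp_all add: algebra_simps)
  have H2: "(M-2)*a \<le> M*(P-W)" using Fa FW e5 e6 by linarith
  have a0: "a \<ge> 0"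
  proof -
    have "0 \<le> 2*(K-1)*P" using K1 P0 by simp
    hence "0 \<le> (M-2)*a" using Fa1 W0' by linarith
    thus ?thesis using M3 by (simp add: zero_le_mult_iff)
  qed
  have WP: "W + 1 \<le> P"
  proof -
    have "(M+2-2*K)*P \<le> (M+2)*P" using K1 P0 by (intro mult_right_mono) auto
    hence "(M+2)*W < (M+2)*P" using FW M3 by linarith
    thus ?thesis using M3 by (simp add: mult_less_cancel_left_pos)
  qed
  have cont: "a + (K-1)*P + W \<le> M*P"
  proof -
    have "(K-1)*P \<le> (M-3)*P" using KM P0 by (intro mult_right_mono) auto
    hence q1: "(K-1)*P + W + 1 \<le> (M-2)*P" using WP by (simp add: algebra_simps)
    have q2: "M*((K-1)*P + W + 1) \<le> M*((M-2)*P)" using q1 M3 by (intro mult_left_mono) auto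
    have q3: "(M-2)*(a + (K-1)*P + W) = (M-2)*a + (M-2)*((K-1)*P) + (M-2)*W" by (simp add: algebra_simps)
    have q4: "M*((K-1)*P + W + 1) = M*((K-1)*P) + M*W + M" by (simp add: algebra_simps)
    have q5: "(M-2)*((K-1)*P) = M*((K-1)*P) - 2*((K-1)*P)" "(M-2)*W = M*W - 2*W" by (simp_all add: algebra_simps)
    have q6: "(M-2)*a \<le> 2*((K-1)*P) + 2*W + (M-3)" using Fa(1) by (simp only: mult.assoc)
    have q7: "(M-2)*(M*P) = M*((M-2)*P)" by (simp add: algebra_simps)
    have "(M-2)*(a + (K-1)*P + W) = (M-2)*a + (M*((K-1)*P) - 2*((K-1)*P)) + (M*W - 2*W)" using q3 q5 by simp
    also have "\<dots> \<le> M*((K-1)*P) + M*W + M" using q6 by simp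
    also have "\<dots> = M*((K-1)*P + W + 1)" using q4 by simp
    also have "\<dots> \<le> (M-2)*(M*P)" unfolding q7 by (rule q2)
    finally have "(M-2)*(a + (K-1)*P + W) \<le> (M-2)*(M*P)" .
    thus ?thesis using M3 by (simp add: mult_le_cancel_left_pos)
  qed
  have mem: "a + int j*P < M*int (f (j,i)) \<and> M*int (f (j,i)) < a + int j*P + W \<and> int (f (j,i)) = (a + int j*P) div M + 1 + int i"
    if "j < k" "i < n" for j i
  proof -
    define u where "u = (a + int j*P) div M"
    have u0: "u \<ge> 0" unfolding u_def using a0 P0 M3 by (simp add: pos_imp_zdiv_nonneg_iff)
    have fx: "int (f (j,i)) = u + 1 + int i" unfolding f_def u_def using u0 u_def by simp
    have du: "M*u \<le> a + int j*P" "a + int j*P < M*u + M" unfolding u_def using divb[of M] M3 by auto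
    have ii: "int i + 2 \<le> W div M" using that(2) unfolding n_def by linarith
    have "M*(int i + 2) \<le> M*(W div M)" using ii M3 by (intro mult_left_mono) auto
    moreover have "M*(W div M) \<le> W" using divb[of M] M3 by auto
    ultimately have wi: "M*int i + 2*M \<le> W" by (simp add: algebra_simps)
    have "0 \<le> M*int i" using M3 by simp
    have "M*int (f (j,i)) = M*u + M + M*int i" using fx by (simp add: algebra_simps)
    hence "a + int j*P < M*int (f (j,i))" "M*int (f (j,i)) < a + int j*P + W" using du wi M3 \<open>0 \<le> M*int i\<close> by linarith+
    thus ?thesis using fx unfolding u_def by simp
  qed
  have jle: "int j * P \<le> (K-1)*P" if "j < k" for j
    using that P0 unfolding K_def by (intro mult_right_mono) auto
  have sub: "A \<subseteq> {..<p}"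
  proof
    fix x assume "x \<in> A"
    then obtain j i where ji: "j < k" "i < n" "x = f (j,i)" unfolding A_def by auto
    have "M*int x < M*P" unfolding ji(3) using mem[OF ji(1,2)] jle[OF ji(1)] cont by linarith
    hence "int x < P" using M3 by (simp add: mult_less_cancel_left_pos)
    thus "x \<in> {..<p}" unfolding P_def by simp
  qed
  have sf: "msum_free_mod m p A"
    unfolding msum_free_mod_def
  proof (intro conjI sub notI)
    assume "\<exists>x\<in>A. \<exists>y\<in>A. \<exists>z\<in>A. (x + y) mod p = m * z mod p"
    then obtain x y z where xyz: "x \<in> A" "y \<in> A" "z \<in> A" "(x + y) mod p = m * z mod p" by blast
    obtain j1 i1 where 1: "j1 < k" "i1 < n" "x = f (j1,i1)" using xyz(1) unfolding A_def by auto
    obtain j2 i2 where 2: "j2 < k" "i2 < n" "y = f (j2,i2)" using xyz(2) unfolding A_def by auto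
    obtain j3 i3 where 3: "j3 < k" "i3 < n" "z = f (j3,i3)" using xyz(3) unfolding A_def by auto
    have "int ((x + y) mod p) = int (m * z mod p)" using xyz(4) by simp
    hence "(int x + int y) mod P = (M * int z) mod P" unfolding P_def M_def by (simp add: zmod_int)
    hence dv: "P dvd (int x + int y - M * int z)" by (simp add: mod_eq_dvd_iff)
    show False
      using sumfree_core[OF M3 P0, of "int j1" K "int j2" "int j3" a "int x" W "int y" "int z"]
        mem[OF 1(1,2)] mem[OF 2(1,2)] mem[OF 3(1,2)] 1(1,3) 2(1,3) 3(1,3) Fa1 H2 dv
      unfolding K_def by auto
  qed
  have inj: "inj_on f ({..<k} \<times> {..<n})"
  proof (rule inj_onI)
    fix u v assume u: "u \<in> {..<k} \<times> {..<n}" and v: "v \<in> {..<k} \<times> {..<n}" and e: "f u = f v"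
    obtain j i where uji: "u = (j,i)" "j < k" "i < n" using u by auto
    obtain j' i' where vji: "v = (j',i')" "j' < k" "i' < n" using v by auto
    have m1: "a + int j*P < M*int (f (j,i))" "M*int (f (j,i)) < a + int j*P + W"
      "int (f (j,i)) = (a + int j*P) div M + 1 + int i" using mem[OF uji(2,3)] by auto
    have m2: "a + int j'*P < M*int (f (j,i))" "M*int (f (j,i)) < a + int j'*P + W"
      "int (f (j,i)) = (a + int j'*P) div M + 1 + int i'" using mem[OF vji(2,3)] e uji(1) vji(1) by auto
    have "j = j'"
    proof (rule ccontr)
      assume "j \<noteq> j'"
      hence "j < j' \<or> j' < j" by auto
      thus False
      proof
        assume "j < j'"
        hence "(int j + 1)*P \<le> int j' * P" using P0 by (intro mult_right_mono) auto
        thus False using m1 m2 WP by (simp add: algebra_simps)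
      next
        assume "j' < j"
        hence "(int j' + 1)*P \<le> int j * P" using P0 by (intro mult_right_mono) auto
        thus False using m1 m2 WP by (simp add: algebra_simps)
      qed
    qed
    hence "i = i'" using m1(3) m2(3) by simp
    thus "u = v" using uji vji \<open>j = j'\<close> by simp
  qed
  have cardA: "card A = k * n" unfolding A_def using inj by (simp add: card_image card_cartesian_product)
  have nW: "real n \<ge> real_of_int W / real m - 2"
  proof -
    have "W < M*(W div M) + M" using divb[of M] M3 by auto
    hence "real_of_int W < real_of_int (M*(W div M) + M)" by (simp only: of_int_less_iff)
    hence "real_of_int W < real m * real_of_int (W div M) + real m" unfolding M_def by simp
    hence "real_of_int W / real m < real_of_int (W div M) + 1" using m3 by (simp add: field_simps)
    moreover have "real n \<ge> real_of_int (W div M) - 1"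
    proof -
      have "int n \<ge> W div M - 1" unfolding n_def by simp
      hence "real_of_int (int n) \<ge> real_of_int (W div M - 1)" by (simp only: of_int_le_iff)
      thus ?thesis by simp
    qed
    ultimately show ?thesis by linarith
  qed
  have Wl: "real_of_int W \<ge> (real m+2-2*real k)*real p/(real m+2) - 2"
  proof -
    have "real_of_int ((M+2-2*K)*P - M) < real_of_int ((M+2)*W + (M+2))" using FW(2) by (simp only: of_int_less_iff)
    hence "(real m+2-2*real k)*real p - real m < (real m+2)*real_of_int W + (real m+2)"
      unfolding M_def K_def P_def by simp
    hence "(real m+2-2*real k)*real p < (real m+2)*(real_of_int W + 2)" by (simp add: algebra_simps)
    thus ?thesis by (simp add: field_simps)
  qed
  have "real (card A) = real k * real n" using cardA by simp
  also have "\<dots> \<ge> real k * (real_of_int W / real m - 2)" using nW by (intro mult_left_mono) auto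
  finally have c1: "real (card A) \<ge> real k * (real_of_int W / real m - 2)" .
  have "real_of_int W / real m \<ge> ((real m+2-2*real k)*real p/(real m+2) - 2) / real m"
    using Wl m3 by (intro divide_right_mono) auto
  moreover have "((real m+2-2*real k)*real p/(real m+2) - 2) / real m \<ge> (real m+2-2*real k)*real p/(real m*(real m+2)) - 2"
  proof -
    have "((real m+2-2*real k)*real p/(real m+2) - 2) / real m = (real m+2-2*real k)*real p/(real m*(real m+2)) - 2/real m"
    proof -
      have h: "real m \<noteq> 0" "real m + 2 \<noteq> 0" using m3 by auto
      show ?thesis by (simp add: diff_divide_distrib divide_divide_eq_left mult.commute)
    qed
    moreover have "2/real m \<le> 2" using m3 by (simp add: field_simps)
    ultimately show ?thesis by linarith
  qed
  ultimately have "real_of_int W / real m - 2 \<ge> (real m+2-2*real k)*real p/(real m*(real m+2)) - 4" by linarith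
  hence "real k * (real_of_int W / real m - 2) \<ge> real k * ((real m+2-2*real k)*real p/(real m*(real m+2)) - 4)"
    by (intro mult_left_mono) auto
  hence "real (card A) \<ge> real k*(real m+2-2*real k)*real p/(real m*(real m+2)) - 4*real k"
    using c1 by (simp add: algebra_simps)
  thus ?thesis using sf by blast
qed

lemma dm_ge:
  assumes "msum_free_mod m p A"
  shows "real (card A) / real p \<le> dm_mod m p"
proof -
  have "{real (card A) / real p | A. msum_free_mod m p A} \<subseteq> (\<lambda>A. real (card A) / real p) ` Pow {..<p}"
    unfolding msum_free_mod_def by auto
  hence fin: "finite {real (card A) / real p | A. msum_free_mod m p A}"
    by (rule finite_subset) simp
  show ?thesis unfolding dm_mod_def using assms by (intro Max_ge[OF fin]) auto
qed

lemma primes_at_top_nontriv: "primes_at_top \<noteq> bot"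
proof
  assume "primes_at_top = bot"
  hence "eventually (\<lambda>x. False) primes_at_top" by simp
  hence "eventually (\<lambda>x. x \<in> {p. prime p} \<longrightarrow> False) sequentially"
    unfolding primes_at_top_def eventually_inf_principal .
  then obtain N :: nat where N: "\<forall>n\<ge>N. n \<in> {p. prime p} \<longrightarrow> False" unfolding eventually_sequentially by blast
  obtain q where "prime q" "q > N" using bigger_prime by blast
  thus False using N by auto
qed

lemma lower:
  fixes m k :: nat and L :: real
  assumes m3: "m \<ge> 3" and k1: "k \<ge> 1" and km: "k \<le> m - 2" and k2: "2*k \<le> m + 1"
    and lim: "((\<lambda>p. dm_mod m p) \<longlongrightarrow> L) primes_at_top"
  shows "real k*(real m+2-2*real k)/(real m*(real m+2)) \<le> L"
proof -
  define c where "c = real k*(real m+2-2*real k)/(real m*(real m+2))"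
  have ev: "eventually (\<lambda>p. c - 4*real k / real p \<le> dm_mod m p) sequentially"
    unfolding eventually_sequentially
  proof (intro exI allI impI)
    fix p assume pm: "m \<le> p"
    obtain A where A: "msum_free_mod m p A"
      "real (card A) \<ge> real k*(real m+2-2*real k)*real p/(real m*(real m+2)) - 4*real k"
      using construct[OF m3 k1 km k2 pm] by blast
    have pp: "real p > 0" using pm m3 by auto
    have "real k*(real m+2-2*real k)*real p/(real m*(real m+2)) = c * real p" unfolding c_def by simp
    hence "real (card A) \<ge> c * real p - 4*real k" using A(2) by simp
    hence "real (card A) / real p \<ge> (c * real p - 4*real k) / real p" using pp by (intro divide_right_mono) auto
    moreover have "(c * real p - 4*real k) / real p = c - 4*real k / real p" using pp by (simp add: field_simps)
    ultimately show "c - 4*real k / real p \<le> dm_mod m p" using dm_ge[OF A(1)] by linarith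
  qed
  have g: "((\<lambda>p. c - 4*real k / real p) \<longlongrightarrow> c) sequentially"
  proof -
    have "((\<lambda>p::nat. 4*real k / real p) \<longlongrightarrow> 0) sequentially"
      by (intro tendsto_divide_0[OF tendsto_const] filterlim_at_top_imp_at_infinity filterlim_real_sequentially)
    from tendsto_diff[OF tendsto_const this] show ?thesis by simp
  qed
  have le: "primes_at_top \<le> sequentially" unfolding primes_at_top_def by simp
  have "c \<le> L"
    by (rule tendsto_le[OF primes_at_top_nontriv lim tendsto_mono[OF le g] filter_leD[OF le ev]])
  thus ?thesis unfolding c_def .
qed

theorem theorem1p7:
  fixes m :: nat and L :: real
  assumes "m \<ge> 3"
    and "((\<lambda>p. dm_mod m p) \<longlongrightarrow> L) primes_at_top"
  shows "(m \<le> 6 \<longrightarrow> L \<ge> 1 / (real m + 2)) \<and> (m \<ge> 7 \<longrightarrow> L \<ge> 1 / 8)"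
proof (intro conjI impI)
  assume "m \<le> 6"
  have "real 1*(real m+2-2*real (1::nat))/(real m*(real m+2)) \<le> L"
    using assms by (intro lower) auto
  moreover have "real 1*(real m+2-2*real (1::nat))/(real m*(real m+2)) = 1/(real m + 2)"
  proof -
    have h: "real m > 0" "real m + 2 > 0" using assms by auto
    have "real m*(real m+2) \<noteq> 0" using h by simp
    thus ?thesis using h by (simp add: field_simps)
  qed
  ultimately show "L \<ge> 1 / (real m + 2)" by simp
next
  assume m7: "m \<ge> 7"
  define k where "k = (m+2) div 4"
  have kc: "k \<ge> 1" "k \<le> m - 2" "2*k \<le> m + 1" using m7 unfolding k_def by auto
  have b: "real k*(real m+2-2*real k)/(real m*(real m+2)) \<le> L"
    using assms kc by (intro lower) auto
  define s where "s = (m+2) mod 4"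
  have ms: "m + 2 = 4*k + s" "s < 4" unfolding k_def s_def by auto
  have key: "real m*(real m+2) \<le> 8*(real k*(real m+2-2*real k))"
  proof -
    have r: "real m = 4*real k + real s - 2" using ms(1)
      by (metis add_diff_cancel_right' of_nat_add of_nat_mult of_nat_numeral)
    have "s = 0 \<or> s = 1 \<or> s = 2 \<or> s = 3" using ms(2) by auto
    thus ?thesis unfolding r using kc(1) by (auto simp: algebra_simps)
  qed
  have "1/8 \<le> real k*(real m+2-2*real k)/(real m*(real m+2))"
  proof -
    have D: "real m*(real m+2) > 0" using m7 by simp
    show ?thesis unfolding pos_le_divide_eq[OF D] using key by simp
  qed
  thus "L \<ge> 1/8" using b by linarith
qed
end
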